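(* Let $\mu>0$ and $k>0$. The function $T_l:(x_l,1)\to(0,+\infty)$ defined in the context is continuous, strictly decreasing, and satisfies: (i) $\displaystyle\lim_{x\to1^-}T_l(x)=\frac{1}{\sqrt{\mu}}\arctan\frac{k}{\sqrt{\mu}}$; (ii) $\displaystyle\lim_{x\to x_l^+}T_l(x)=+\infty$.
   Context: Let $G(u)=u^3/3-u^4/4$ for $u\in[0,1]$ (a primitive of $g(u)=u^2(1-u)$). Let $y(x)=-k(1-x)$ for $x\in(0,1)$ and let $x_l\in(0,1)$ be the abscissa of the unique intersection, in $(0,1)$, of the line $v=y(u)$ with the curve $v^2=2\mu G(u)$, $v<0$. For $x\in(x_l,1)$ one has $y(x)^2<2\mu G(x)$, and $m(x)$ denotes the unique number in $(0,x)$ with $2\mu G(m(x))=2\mu G(x)-y(x)^2$. Define $$T_l(x)=\int_{m(x)}^{x}\frac{du}{\sqrt{y(x)^2+2\mu(G(u)-G(x))}},\qquad x\in(x_l,1).$$ *)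

theory Defs
  imports "HOL-Analysis.Analysis"
begin

text \<open>Primitive G of g(u) = u^2 (1 - u).\<close>
definition G :: "real \<Rightarrow> real" where
  "G u = u ^ 3 / 3 - u ^ 4 / 4"

definition yline :: "real \<Rightarrow> real \<Rightarrow> real" where
  "yline k x = - k * (1 - x)"

definition xl :: "real \<Rightarrow> real \<Rightarrow> real" where
  "xl mu k = (THE u. 0 < u \<and> u < 1 \<and>
     (\<exists>v. v = yline k u \<and> v ^ 2 = 2 * mu * G u \<and> v < 0))"

definition mfun :: "real \<Rightarrow> real \<Rightarrow> real \<Rightarrow> real" where
  "mfun mu k x = (THE s. 0 < s \<and> s < x \<and>
     2 * mu * G s = 2 * mu * G x - (yline k x) ^ 2)"

definition Tl_integrand :: "real \<Rightarrow> real \<Rightarrow> real \<Rightarrow> real \<Rightarrow> real" where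
  "Tl_integrand mu k x u = 1 / sqrt ((yline k x) ^ 2 + 2 * mu * (G u - G x))"

definition Tl :: "real \<Rightarrow> real \<Rightarrow> real \<Rightarrow> real" where
  "Tl mu k x = integral {mfun mu k x .. x} (Tl_integrand mu k x)"

end

theory Submission
  imports Defs
begin


definition DD :: "real \<Rightarrow> real" where "DD t = 1 - 4*t/3 + t^2/2"
definition rr :: "real \<Rightarrow> real" where "rr s = s * sqrt (DD s)"
definition PP :: "real \<Rightarrow> real" where "PP w = w^4/6 + w^3/3 + w^2/2"
definition QQ :: "real \<Rightarrow> real" where "QQ t = sqrt (PP (1/(1-t)))"

lemma G_deriv: "(G has_real_derivative (u^2*(1-u))) (at u)"
  unfolding G_def
  by (auto intro!: derivative_eq_intros simp: algebra_simps power2_eq_square power3_eq_cube)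

lemma G_cont: "continuous_on S G"
  unfolding G_def by (intro continuous_intros) auto

lemma G_strict: assumes "0 \<le> a" "a < b" "b \<le> 1" shows "G a < G b"
proof (rule DERIV_pos_imp_increasing_open[OF assms(2)])
  fix x assume "a < x" "x < b"
  then show "\<exists>y. DERIV G x :> y \<and> 0 < y" using assms
    by (intro exI[of _ "x^2*(1-x)"]) (auto simp: G_deriv)
qed (rule G_cont)

lemma G_mono: "0 \<le> a \<Longrightarrow> a \<le> b \<Longrightarrow> b \<le> 1 \<Longrightarrow> G a \<le> G b"
  using G_strict[of a b] by (cases "a = b") auto

lemma G_nonneg: "0 \<le> a \<Longrightarrow> a \<le> 1 \<Longrightarrow> G a \<ge> 0"
  using G_mono[of 0 a] by (simp add: G_def)

lemma G_upper: "G a \<le> a^3/3" unfolding G_def by simp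

lemma G_lower: "0 \<le> a \<Longrightarrow> a \<le> 1 \<Longrightarrow> a^3/12 \<le> G a"
proof -
  assume "0 \<le> a" "a \<le> 1"
  then have "a^4 \<le> a^3" by (intro power_decreasing) auto
  then show ?thesis unfolding G_def by simp
qed

lemma DD_pos: "DD t > 0"
proof -
  have "DD t = (t-4/3)^2/2 + 1/9" by (simp add: DD_def power2_eq_square field_simps)
  moreover have "(t-4/3)^2/2 \<ge> 0" by simp
  ultimately show ?thesis by linarith
qed

lemma DD_strict: "0 \<le> s1 \<Longrightarrow> s1 < s2 \<Longrightarrow> s2 \<le> 1 \<Longrightarrow> DD s2 < DD s1"
proof -
  assume a: "0 \<le> s1" "s1 < s2" "s2 \<le> 1"
  have "DD s1 - DD s2 = (s2 - s1) * (4/3 - (s1+s2)/2)" unfolding DD_def power2_eq_square by argo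
  moreover have "(s2 - s1) * (4/3 - (s1+s2)/2) > 0" using a by (intro mult_pos_pos) auto
  ultimately show ?thesis by simp
qed

lemma rr_sq: "0 \<le> s \<Longrightarrow> s \<le> 1 \<Longrightarrow> (rr s)^2 = 2 * (G 1 - G (1 - s))"
proof -
  assume "0 \<le> s" "s \<le> 1"
  then have "(rr s)^2 = s^2 * DD s" using DD_pos[of s] unfolding rr_def by (simp add: power_mult_distrib)
  also have "\<dots> = 2 * (G 1 - G (1 - s))" unfolding G_def DD_def
    by (simp add: field_simps power2_eq_square power3_eq_cube power4_eq_xxxx)
  finally show ?thesis .
qed

lemma rr_nonneg: "0 \<le> s \<Longrightarrow> s \<le> 1 \<Longrightarrow> rr s \<ge> 0"
  using DD_pos[of s] unfolding rr_def by simp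

lemma rr_pos: "0 < s \<Longrightarrow> s \<le> 1 \<Longrightarrow> rr s > 0"
  using DD_pos[of s] unfolding rr_def by simp

lemma rr_strict: assumes "0 \<le> a" "a < b" "b \<le> 1" shows "rr a < rr b"
proof -
  have "G (1 - b) < G (1 - a)" using assms by (intro G_strict) auto
  then have "(rr a)^2 < (rr b)^2" using assms by (simp add: rr_sq)
  then show ?thesis using rr_nonneg[of b] assms by (simp add: power_less_imp_less_base)
qed

lemma rr_cont: "continuous_on {0..1} rr"
  unfolding rr_def DD_def by (intro continuous_intros) auto

lemma rr_0: "rr 0 = 0" by (simp add: rr_def)
lemma rr_1: "(rr 1)^2 = 1/6" by (simp add: rr_sq G_def)

lemma DD_deriv: "(DD has_real_derivative (s - 4/3)) (at s)"
  unfolding DD_def by (auto intro!: derivative_eq_intros)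

lemma rr_deriv: assumes "0 \<le> s" "s \<le> 1"
  shows "(rr has_real_derivative ((1-s)^2 / sqrt (DD s))) (at s)"
proof -
  have d: "DD s > 0" using DD_pos by auto
  have sd: "sqrt (DD s) > 0" using d by simp
  have q: "((\<lambda>s. sqrt (DD s)) has_real_derivative (inverse (sqrt (DD s)) / 2 * (s - 4/3))) (at s)"
    by (rule DERIV_chain2[OF DERIV_real_sqrt[OF d] DD_deriv])
  have rf: "rr = (\<lambda>s. s * sqrt (DD s))" by (simp add: rr_def fun_eq_iff)
  have "(rr has_real_derivative (1 * sqrt (DD s) + (inverse (sqrt (DD s)) / 2 * (s - 4/3)) * s)) (at s)"
    unfolding rf by (rule DERIV_mult[OF DERIV_ident q])
  moreover have "1 * sqrt (DD s) + (inverse (sqrt (DD s)) / 2 * (s - 4/3)) * s = (1-s)^2 / sqrt (DD s)"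
  proof -
    have e: "2*DD s + s*(s - 4/3) = 2*(1-s)^2" unfolding DD_def power2_eq_square by (simp add: algebra_simps)
    have "1 * sqrt (DD s) + (inverse (sqrt (DD s)) / 2 * (s - 4/3)) * s = (2*(sqrt (DD s))^2 + s*(s - 4/3)) / (2* sqrt (DD s))"
      using sd by (simp add: field_simps power2_eq_square)
    also have "\<dots> = (2*DD s + s*(s-4/3)) / (2* sqrt (DD s))" using d by simp
    also have "\<dots> = (1-s)^2 / sqrt (DD s)" unfolding e using sd by simp
    finally show ?thesis .
  qed
  ultimately show ?thesis by simp
qed



definition rinv :: "real \<Rightarrow> real" where "rinv = inv_into {0..1} rr"

lemma rr_inj: "inj_on rr {0..1}"
proof (rule linorder_inj_onI')
  fix i j :: real assume "i \<in> {0..1}" "j \<in> {0..1}" "i < j"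
  then have "rr i < rr j" by (intro rr_strict) auto
  then show "rr i \<noteq> rr j" by simp
qed

lemma rr_1_pos: "rr 1 > 0" using rr_pos[of 1] by simp

lemma rr_image: "rr ` {0..1} = {0..rr 1}"
proof
  show "rr ` {0..1} \<subseteq> {0..rr 1}"
  proof
    fix y assume "y \<in> rr ` {0..1}"
    then obtain x where x: "x \<in> {0..1}" "y = rr x" by auto
    have "rr x \<le> rr 1" using rr_strict[of x 1] x by (cases "x = 1") auto
    then show "y \<in> {0..rr 1}" using rr_nonneg[of x] x by auto
  qed
  show "{0..rr 1} \<subseteq> rr ` {0..1}"
  proof
    fix y assume "y \<in> {0..rr 1}"
    then obtain x where "0 \<le> x" "x \<le> 1" "rr x = y"
      using IVT'[of rr 0 y 1] rr_cont by (auto simp: rr_0)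
    then show "y \<in> rr ` {0..1}" by auto
  qed
qed

lemma rinv_rr: "s \<in> {0..1} \<Longrightarrow> rinv (rr s) = s"
  unfolding rinv_def using rr_inj by (simp add: inv_into_f_f)

lemma rr_rinv: assumes "y \<in> {0..rr 1}" shows "rr (rinv y) = y" "rinv y \<in> {0..1}"
proof -
  have "y \<in> rr ` {0..1}" using assms rr_image by simp
  then show "rr (rinv y) = y" "rinv y \<in> {0..1}" unfolding rinv_def
    by (rule f_inv_into_f, rule inv_into_into)
qed

lemma rinv_cont: "continuous_on {0..rr 1} rinv"
proof -
  have "continuous_on (rr ` {0..1}) rinv"
    by (rule continuous_on_inv[OF rr_cont]) (auto simp: rinv_rr)
  then show ?thesis by (simp add: rr_image)
qed

lemma rinv_0: "rinv 0 = 0" using rinv_rr[of 0] by (simp add: rr_0)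

lemma rinv_lt1: assumes "0 \<le> y" "y < rr 1" shows "rinv y < 1"
proof -
  have "rinv y \<le> 1" "rr (rinv y) = y" using rr_rinv[of y] assms by auto
  then show ?thesis using assms by (cases "rinv y = 1") auto
qed

lemma rinv_mono: assumes "0 \<le> y1" "y1 \<le> y2" "y2 \<le> rr 1" shows "rinv y1 \<le> rinv y2"
proof (rule ccontr)
  assume "\<not> ?thesis"
  then have "rr (rinv y2) < rr (rinv y1)"
    using rr_rinv[of y1] rr_rinv[of y2] assms by (intro rr_strict) auto
  then show False using rr_rinv[of y1] rr_rinv[of y2] assms by auto
qed

lemma QQ_cont: "continuous_on {..<1} QQ"
  unfolding QQ_def PP_def by (intro continuous_intros) auto

lemma PP_mono: "1 \<le> w1 \<Longrightarrow> w1 \<le> w2 \<Longrightarrow> PP w1 \<le> PP w2"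
  unfolding PP_def by (intro add_mono divide_right_mono power_mono) auto

lemma QQ_mono: assumes "0 \<le> t1" "t1 \<le> t2" "t2 < 1" shows "QQ t1 \<le> QQ t2"
proof -
  have "1 \<le> 1/(1-t1)" "1/(1-t1) \<le> 1/(1-t2)" using assms by (auto simp: field_simps)
  then show ?thesis unfolding QQ_def by (intro real_sqrt_le_mono PP_mono)
qed

lemma QQ_0: "QQ 0 = 1" by (simp add: QQ_def PP_def)

lemma QQ_ge1: "0 \<le> t \<Longrightarrow> t < 1 \<Longrightarrow> QQ t \<ge> 1"
  using QQ_mono[of 0 t] QQ_0 by simp

lemma PP_mul: "(u::real) \<noteq> 0 \<Longrightarrow> PP (1/u) * u^4 = 1/6 + u/3 + u^2/2"
  unfolding PP_def by (simp add: field_simps power2_eq_square power3_eq_cube power4_eq_xxxx)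

lemma QQ_id: assumes "0 \<le> t" "t < 1" shows "QQ t * ((1-t)^2 / sqrt (DD t)) = 1"
proof -
  have d: "DD t > 0" using DD_pos assms by auto
  have u: "1 - t \<noteq> 0" using assms by simp
  have e1: "PP (1/(1-t)) * (1-t)^4 = 1/6 + (1-t)/3 + (1-t)^2/2"
    using PP_mul[OF u] .
  have e2: "DD t = 1/6 + (1-t)/3 + (1-t)^2/2" unfolding DD_def power2_eq_square by argo
  have "PP (1/(1-t)) * (1-t)^4 = DD t" using e1 e2 by simp
  then have "sqrt (DD t) = sqrt (PP (1/(1-t)) * ((1-t)^2)^2)"
    by (simp add: power_mult[symmetric])
  also have "\<dots> = sqrt (PP (1/(1-t))) * (1-t)^2" by (subst real_sqrt_mult) (simp only: real_sqrt_abs abs_power2)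
  finally have "sqrt (PP (1/(1-t))) * (1-t)^2 = sqrt (DD t)" by simp
  then show ?thesis using d unfolding QQ_def by (simp add: field_simps)
qed



definition Rf :: "real \<Rightarrow> real \<Rightarrow> real" where "Rf c s = s * sqrt (DD s + c)"
definition af :: "real \<Rightarrow> real \<Rightarrow> real" where "af c s = arcsin (sqrt (DD s / (DD s + c)))"
definition Kf :: "real \<Rightarrow> real \<Rightarrow> real \<Rightarrow> real" where "Kf c s p = QQ (rinv (Rf c s * sin p))"
definition TT :: "real \<Rightarrow> real \<Rightarrow> real \<Rightarrow> real" where
  "TT mu k s = integral {af (k^2/mu) s .. pi/2} (Kf (k^2/mu) s) / sqrt mu"

lemma DD_cont: "continuous_on S DD" unfolding DD_def by (intro continuous_intros) auto

lemma Rf_cont: "c \<ge> 0 \<Longrightarrow> continuous_on S (Rf c)"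
  unfolding Rf_def using DD_pos by (intro continuous_intros DD_cont)

lemma Rf_sq: "0 \<le> s \<Longrightarrow> c \<ge> 0 \<Longrightarrow> (Rf c s)^2 = (rr s)^2 + c * s^2"
  unfolding Rf_def rr_def using DD_pos[of s] by (simp add: power_mult_distrib algebra_simps)

lemma Rf_nonneg: "0 \<le> s \<Longrightarrow> c \<ge> 0 \<Longrightarrow> Rf c s \<ge> 0"
  unfolding Rf_def using DD_pos[of s] by simp

lemma Rf_pos: "0 < s \<Longrightarrow> c \<ge> 0 \<Longrightarrow> Rf c s > 0"
  unfolding Rf_def using DD_pos[of s] by simp

lemma Rf_0: "Rf c 0 = 0" by (simp add: Rf_def)

lemma Rf_mono: assumes "0 \<le> s1" "s1 \<le> s2" "s2 \<le> 1" "c \<ge> 0" shows "Rf c s1 \<le> Rf c s2"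
proof -
  have "rr s1 \<le> rr s2" using rr_strict[of s1 s2] assms by (cases "s1 = s2") auto
  then have a: "(rr s1)^2 \<le> (rr s2)^2" using rr_nonneg[of s1] assms by (intro power_mono) auto
  have b: "c * s1^2 \<le> c * s2^2" using assms by (intro mult_left_mono power_mono) auto
  have "(Rf c s1)^2 \<le> (Rf c s2)^2" unfolding Rf_sq[OF assms(1) assms(4)] Rf_sq[OF order.trans[OF assms(1,2)] assms(4)]
    using a b by linarith
  moreover have "0 \<le> Rf c s2" using Rf_nonneg[of s2 c] assms by linarith
  ultimately show ?thesis by (rule power2_le_imp_le)
qed

lemma af_arg: "c > 0 \<Longrightarrow> 0 \<le> sqrt (DD s / (DD s + c)) \<and> sqrt (DD s / (DD s + c)) < 1"
  using DD_pos[of s] by (simp add: field_simps)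

lemma af_range: assumes "c > 0" shows "0 \<le> af c s" "af c s < pi/2"
proof -
  have h: "0 \<le> sqrt (DD s / (DD s + c))" "sqrt (DD s / (DD s + c)) < 1" using af_arg[OF assms, of s] by auto
  show "0 \<le> af c s" unfolding af_def by (rule arcsin_nonneg) (use h in auto)
  have "af c s < arcsin 1" unfolding af_def by (rule arcsin_less_arcsin) (use h in linarith)+
  then show "af c s < pi/2" by simp
qed

lemma af_strict: assumes "c > 0" "0 \<le> s1" "s1 < s2" "s2 \<le> 1" shows "af c s2 < af c s1"
proof -
  have d: "DD s2 < DD s1" using DD_strict assms by auto
  have "DD s2 / (DD s2 + c) < DD s1 / (DD s1 + c)"
    using d DD_pos[of s1] DD_pos[of s2] assms(1) by (simp add: field_simps)
  then have l: "sqrt (DD s2 / (DD s2 + c)) < sqrt (DD s1 / (DD s1 + c))" by simp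
  have h1: "0 \<le> sqrt (DD s2 / (DD s2 + c))" "sqrt (DD s1 / (DD s1 + c)) < 1" 
    using af_arg[OF assms(1), of s1] af_arg[OF assms(1), of s2] by auto
  show ?thesis unfolding af_def by (rule arcsin_less_arcsin) (use h1 l in linarith)+
qed

lemma af_cont: assumes "c > 0" shows "continuous_on S (af c)"
proof -
  have "continuous_on S (\<lambda>s. sqrt (DD s / (DD s + c)))"
    by (intro continuous_intros DD_cont) (metis DD_pos add_pos_pos assms less_irrefl)
  moreover have "\<forall>s\<in>S. -1 \<le> sqrt (DD s / (DD s + c)) \<and> sqrt (DD s / (DD s + c)) \<le> 1"
    using af_arg[OF assms] by (metis less_eq_real_def neg_le_0_iff_le order.trans zero_le_one)
  ultimately show ?thesis unfolding af_def[abs_def] by (rule continuous_on_arcsin)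
qed

lemma af_eq: assumes "c > 0" "0 < s" "s \<le> 1" shows "af c s = arcsin (rr s / Rf c s)"
proof -
  have "rr s / Rf c s = sqrt (DD s) / sqrt (DD s + c)" using assms unfolding rr_def Rf_def by simp
  also have "\<dots> = sqrt (DD s / (DD s + c))" by (simp add: real_sqrt_divide)
  finally show ?thesis unfolding af_def by simp
qed



lemma yline_sq: "(yline k x)^2 = k^2 * (1-x)^2"
  unfolding yline_def by (simp add: power_mult_distrib)

context fixes mu k :: real assumes mu: "mu > 0" and k: "k > 0"
begin

definition "hh u = 2*mu*G u - k^2*(1-u)^2"

lemma hh_strict: assumes "0 \<le> a" "a < b" "b \<le> 1" shows "hh a < hh b"
proof -
  have "G a < G b" using G_strict assms by auto
  then have "2*mu*G a < 2*mu*G b" using mu by simp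
  moreover have "(1-b)^2 \<le> (1-a)^2" using assms by (intro power_mono) auto
  then have "k^2*(1-b)^2 \<le> k^2*(1-a)^2" by (simp add: mult_left_mono)
  ultimately show ?thesis unfolding hh_def by linarith
qed

lemma hh_cont: "continuous_on S hh"
  unfolding hh_def using G_cont by (intro continuous_intros) auto

lemma xl_props: "0 < xl mu k" "xl mu k < 1" "hh (xl mu k) = 0"
proof -
  have h0: "hh 0 < 0" using k by (simp add: hh_def G_def)
  have h1: "hh 1 > 0" using mu by (simp add: hh_def G_def)
  obtain u where u: "0 \<le> u" "u \<le> 1" "hh u = 0"
    using IVT'[of hh 0 0 1] h0 h1 hh_cont by auto
  have u01: "0 < u" "u < 1" using u h0 h1 by (auto simp: less_eq_real_def)
  let ?P = "\<lambda>u. 0 < u \<and> u < 1 \<and> (\<exists>v. v = yline k u \<and> v ^ 2 = 2 * mu * G u \<and> v < 0)"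
  have Pi: "?P w \<longleftrightarrow> 0 < w \<and> w < 1 \<and> hh w = 0" for w
    using k by (auto simp: hh_def yline_def mult_pos_pos power_mult_distrib)
  have "?P u" using Pi u u01 by auto
  moreover have "w = u" if "?P w" for w
  proof -
    have w: "0 < w" "w < 1" "hh w = 0" using that Pi by auto
    show ?thesis
    proof (rule ccontr)
      assume "w \<noteq> u"
      then consider "w < u" | "u < w" by linarith
      then show False using hh_strict[of w u] hh_strict[of u w] w u u01 by cases auto
    qed
  qed
  ultimately have "xl mu k = u" unfolding xl_def by (rule the_equality)
  then show "0 < xl mu k" "xl mu k < 1" "hh (xl mu k) = 0" using u u01 by auto
qed

lemma above_xl: assumes "xl mu k < x" "x \<le> 1" shows "k^2*(1-x)^2 < 2*mu*G x"
  using hh_strict[of "xl mu k" x] xl_props assms unfolding hh_def by auto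

definition "cc = k^2/mu"
definition "sl = 1 - xl mu k"

lemma cc_pos: "cc > 0" unfolding cc_def using mu k by simp

lemma sl_range: "0 < sl" "sl < 1" using xl_props unfolding sl_def by auto

lemma Rf_lt: assumes "0 \<le> s" "s < sl" shows "Rf cc s < rr 1"
proof -
  have x: "xl mu k < 1 - s" "1 - s \<le> 1" using assms unfolding sl_def by auto
  have "k^2 * s^2 < 2*mu*G (1-s)" using above_xl[OF x] by simp
  then have "cc * s^2 < 2 * G (1-s)" unfolding cc_def using mu by (simp add: field_simps)
  moreover have "(Rf cc s)^2 = 2 * (G 1 - G (1 - s)) + cc * s^2"
    using rr_sq[of s] Rf_sq[of s cc] assms sl_range cc_pos by simp
  ultimately have "(Rf cc s)^2 < (rr 1)^2" by (simp add: rr_1 G_def)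
  then show ?thesis using rr_1_pos by (simp add: power_less_imp_less_base less_imp_le)
qed


abbreviation "UU \<equiv> {0..<sl}"

lemma K_arg: assumes "0 \<le> s" "s < sl" "0 \<le> p" "p \<le> pi/2"
  shows "0 \<le> Rf cc s * sin p" "Rf cc s * sin p < rr 1" "Rf cc s * sin p \<le> Rf cc s"
proof -
  have r: "0 \<le> Rf cc s" "Rf cc s < rr 1" using Rf_nonneg[of s cc] cc_pos Rf_lt assms by auto
  have sn: "0 \<le> sin p" "sin p \<le> 1" using assms by (auto intro: sin_ge_zero)
  show "0 \<le> Rf cc s * sin p" using r sn by simp
  show "Rf cc s * sin p \<le> Rf cc s" using r sn by (simp add: mult_left_le)
  then show "Rf cc s * sin p < rr 1" using r by linarith
qed

lemma K_rinv: assumes "0 \<le> s" "s < sl" "0 \<le> p" "p \<le> pi/2"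
  shows "0 \<le> rinv (Rf cc s * sin p)" "rinv (Rf cc s * sin p) < 1"
  using K_arg[OF assms] rr_rinv(2)[of "Rf cc s * sin p"] rinv_lt1[of "Rf cc s * sin p"] by auto

lemma Kf_ge1: assumes "0 \<le> s" "s < sl" "0 \<le> p" "p \<le> pi/2" shows "Kf cc s p \<ge> 1"
  unfolding Kf_def using K_rinv[OF assms] by (intro QQ_ge1)

lemma Kf_mono: assumes "0 \<le> s1" "s1 \<le> s2" "s2 < sl" "0 \<le> p" "p \<le> pi/2"
  shows "Kf cc s1 p \<le> Kf cc s2 p"
proof -
  have "Rf cc s1 \<le> Rf cc s2" using Rf_mono[of s1 s2 cc] assms sl_range cc_pos by auto
  moreover have "0 \<le> sin p" using assms by (auto intro: sin_ge_zero)
  ultimately have "Rf cc s1 * sin p \<le> Rf cc s2 * sin p" by (rule mult_right_mono)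
  then have "rinv (Rf cc s1 * sin p) \<le> rinv (Rf cc s2 * sin p)"
    using K_arg[of s1 p] K_arg[of s2 p] assms by (intro rinv_mono) auto
  then show ?thesis unfolding Kf_def using K_rinv[of s1 p] K_rinv[of s2 p] assms by (intro QQ_mono) auto
qed

lemma Kf_joint: "continuous_on (UU \<times> {0..pi/2}) (\<lambda>z. Kf cc (fst z) (snd z))"
proof -
  have c0: "continuous_on (UU \<times> {0..pi/2}) (\<lambda>z. Rf cc (fst z))"
    by (rule continuous_on_compose2[OF Rf_cont continuous_on_fst]) (use cc_pos in auto)
  have c1: "continuous_on (UU \<times> {0..pi/2}) (\<lambda>z. Rf cc (fst z) * sin (snd z))"
    by (intro continuous_intros c0)
  have c2: "continuous_on (UU \<times> {0..pi/2}) (\<lambda>z. rinv (Rf cc (fst z) * sin (snd z)))"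
    by (rule continuous_on_compose2[OF rinv_cont c1]) (use K_arg in \<open>force simp: less_imp_le\<close>)
  have c3: "continuous_on (UU \<times> {0..pi/2}) (\<lambda>z. QQ (rinv (Rf cc (fst z) * sin (snd z))))"
    by (rule continuous_on_compose2[OF QQ_cont c2]) (use K_rinv in force)
  then show ?thesis unfolding Kf_def .
qed

lemma Kf_cont: assumes "s \<in> UU" shows "continuous_on {0..pi/2} (Kf cc s)"
proof -
  have "continuous_on {0..pi/2} (\<lambda>p. Kf cc (fst (s,p)) (snd (s,p)))"
    by (rule continuous_on_compose2[OF Kf_joint]) (use assms in \<open>auto intro!: continuous_intros\<close>)
  then show ?thesis by simp
qed

definition "LL s t = (pi/2 - af cc s) * Kf cc s (af cc s + (pi/2 - af cc s) * t)"

lemma LL_joint: "continuous_on (UU \<times> {0..1}) (\<lambda>(s,t). LL s t)"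
proof -
  have ca: "continuous_on (UU \<times> {0..1}) (\<lambda>z. af cc (fst z))"
    by (rule continuous_on_compose2[OF af_cont[OF cc_pos] continuous_on_fst]) auto
  have m: "af cc s + (pi/2 - af cc s) * t \<in> {0..pi/2}" if "t \<in> {0..1}" for s t
  proof -
    have "0 \<le> af cc s" "af cc s < pi/2" using af_range[OF cc_pos] by auto
    moreover have "(pi/2 - af cc s) * t \<le> (pi/2 - af cc s)"
      using that \<open>af cc s < pi/2\<close> by (intro mult_left_le) auto
    moreover have "0 \<le> (pi/2 - af cc s) * t" using that \<open>af cc s < pi/2\<close> by simp
    ultimately have "0 \<le> af cc s + (pi/2 - af cc s) * t \<and> af cc s + (pi/2 - af cc s) * t \<le> pi/2" by linarith
    then show ?thesis by simp
  qed
  have ck: "continuous_on (UU \<times> {0..1}) (\<lambda>z. Kf cc (fst (fst z, af cc (fst z) + (pi/2 - af cc (fst z)) * snd z))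
      (snd (fst z, af cc (fst z) + (pi/2 - af cc (fst z)) * snd z)))"
  proof (rule continuous_on_compose2[OF Kf_joint])
    show "continuous_on (UU \<times> {0..1}) (\<lambda>z. (fst z, af cc (fst z) + (pi/2 - af cc (fst z)) * snd z))"
      by (intro continuous_intros ca)
    show "(\<lambda>z. (fst z, af cc (fst z) + (pi/2 - af cc (fst z)) * snd z)) ` (UU \<times> {0..1}) \<subseteq> UU \<times> {0..pi/2}"
      using m by force
  qed
  have "continuous_on (UU \<times> {0..1}) (\<lambda>z. LL (fst z) (snd z))"
    unfolding LL_def using ck by (auto intro!: continuous_intros ca)
  then show ?thesis by (simp add: case_prod_beta')
qed

lemma TT_alt: assumes "s \<in> UU" shows "TT mu k s = integral {0..1} (LL s) / sqrt mu"
proof -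
  define a where "a = af cc s"
  have a: "0 \<le> a" "a < pi/2" unfolding a_def using af_range[OF cc_pos] by auto
  have sub: "(\<lambda>t. a + (pi/2 - a) * t) ` {0..1} \<subseteq> {0..pi/2}"
  proof
    fix y assume "y \<in> (\<lambda>t. a + (pi/2 - a) * t) ` {0..1}"
    then obtain t where t: "t \<in> {0..1}" "y = a + (pi/2 - a) * t" by auto
    have "(pi/2 - a) * t \<le> (pi/2 - a)" using t a by (intro mult_left_le) auto
    moreover have "0 \<le> (pi/2 - a) * t" using t a by simp
    ultimately have "0 \<le> y \<and> y \<le> pi/2" using t a by linarith
    then show "y \<in> {0..pi/2}" by simp
  qed
  have "((\<lambda>t. (pi/2 - a) *\<^sub>R Kf cc s (a + (pi/2 - a) * t)) has_integral
      integral {a + (pi/2 - a) * 0 .. a + (pi/2 - a) * 1} (Kf cc s)) {0..1}"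
    by (rule has_integral_substitution[OF _ _ sub Kf_cont[OF assms]])
       (use a in \<open>auto intro!: derivative_eq_intros\<close>)
  then have "(LL s has_integral integral {a..pi/2} (Kf cc s)) {0..1}"
    unfolding LL_def a_def[symmetric] by simp
  then show ?thesis unfolding TT_def cc_def[symmetric] a_def by (simp add: integral_unique)
qed

lemma TT_cont: "continuous_on UU (TT mu k)"
proof -
  have "continuous_on UU (\<lambda>s. integral {0..1} (LL s))"
    using integral_continuous_on_param[where U=UU and a=0 and b=1 and f=LL] LL_joint by simp
  then have "continuous_on UU (\<lambda>s. integral {0..1} (LL s) / sqrt mu)"
    by (rule continuous_on_divide[OF _ continuous_on_const]) (use mu in simp)
  then show ?thesis by (rule continuous_on_eq) (simp add: TT_alt)
qed


lemma Kf_int: assumes "s \<in> UU" "0 \<le> a" "b \<le> pi/2" shows "Kf cc s integrable_on {a..b}"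
  by (rule integrable_continuous_interval, rule continuous_on_subset[OF Kf_cont[OF assms(1)]]) (use assms in auto)

lemma int_K_lower: assumes "s \<in> UU" "0 \<le> a" "a \<le> b" "b \<le> pi/2"
  shows "b - a \<le> integral {a..b} (Kf cc s)"
proof -
  have "integral {a..b} (\<lambda>_. 1::real) \<le> integral {a..b} (Kf cc s)"
    by (rule integral_le) (use assms Kf_ge1 Kf_int in auto)
  then show ?thesis using assms by simp
qed

lemma TT_pos: assumes "s \<in> UU" shows "TT mu k s > 0"
proof -
  have "pi/2 - af cc s \<le> integral {af cc s..pi/2} (Kf cc s)"
    using af_range[OF cc_pos, of s] assms by (intro int_K_lower) auto
  moreover have "pi/2 - af cc s > 0" using af_range[OF cc_pos, of s] by simp
  ultimately show ?thesis unfolding TT_def cc_def[symmetric] using mu by simp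
qed

lemma TT_strict: assumes "0 \<le> s1" "s1 < s2" "s2 < sl" shows "TT mu k s1 < TT mu k s2"
proof -
  have sl1: "sl < 1" using sl_range by simp
  define a1 where "a1 = af cc s1"
  define a2 where "a2 = af cc s2"
  have a: "a2 < a1" "0 \<le> a2" "a1 < pi/2" unfolding a1_def a2_def
    using af_strict[OF cc_pos, of s1 s2] af_range[OF cc_pos] assms sl1 by auto
  have u: "s1 \<in> UU" "s2 \<in> UU" using assms by auto
  have "integral {a1..pi/2} (Kf cc s1) \<le> integral {a1..pi/2} (Kf cc s2)"
    by (rule integral_le) (use a u Kf_int Kf_mono[of s1 s2] assms in auto)
  moreover have "integral {a2..a1} (Kf cc s2) + integral {a1..pi/2} (Kf cc s2) = integral {a2..pi/2} (Kf cc s2)"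
    by (rule Henstock_Kurzweil_Integration.integral_combine) (use a u Kf_int in auto)
  moreover have "a1 - a2 \<le> integral {a2..a1} (Kf cc s2)" using a u by (intro int_K_lower) auto
  ultimately have "integral {a1..pi/2} (Kf cc s1) < integral {a2..pi/2} (Kf cc s2)" using a by linarith
  then show ?thesis unfolding TT_def cc_def[symmetric] a1_def a2_def using mu by (simp add: divide_strict_right_mono)
qed

lemma TT_0: "TT mu k 0 = (1 / sqrt mu) * arctan (k / sqrt mu)"
proof -
  have K0: "Kf cc 0 = (\<lambda>_. 1)" by (simp add: fun_eq_iff Kf_def Rf_0 rinv_0 QQ_0)
  have a0: "af cc 0 < pi/2" using af_range[OF cc_pos] by simp
  define b where "b = arctan (k / sqrt mu)"
  have b: "0 < b" "b < pi/2" unfolding b_def using mu k arctan_ubound by (auto simp: zero_less_arctan_iff)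
  have "cos b = 1 / sqrt (1 + (k / sqrt mu)^2)" unfolding b_def by (rule cos_arctan)
  also have "(k / sqrt mu)^2 = cc" unfolding cc_def using mu by (simp add: power_divide)
  finally have cb: "cos b = sqrt (DD 0 / (DD 0 + cc))" by (simp add: DD_def real_sqrt_divide)
  have "af cc 0 = arcsin (sin (pi/2 - b))" unfolding af_def cb[symmetric] by (simp add: sin_cos_eq)
  also have "\<dots> = pi/2 - b" using b by (intro arcsin_sin) auto
  finally have "af cc 0 = pi/2 - b" .
  then show ?thesis unfolding TT_def cc_def[symmetric] K0 b_def using a0 by simp
qed


lemma FTC: assumes x: "xl mu k < x" "x < 1"
  shows "mfun mu k x = 1 - rinv (Rf cc (1-x))"
    and "(Tl_integrand mu k x has_integral TT mu k (1-x)) {1 - rinv (Rf cc (1-x)) .. x}"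
    and "0 < mfun mu k x" "mfun mu k x < x" "2 * mu * G (mfun mu k x) = 2 * mu * G x - (yline k x)^2"
proof -
  define sg where "sg = 1 - x"
  define R where "R = Rf cc sg"
  define S where "S = rinv R"
  define m where "m = 1 - S"
  have sg: "0 < sg" "sg < sl" "sg < 1" using x sl_range unfolding sg_def sl_def by auto
  have R: "0 < R" "R < rr 1" unfolding R_def using Rf_pos[of sg cc] cc_pos Rf_lt[of sg] sg by auto
  have Rsq: "R^2 = (rr sg)^2 + cc * sg^2" unfolding R_def using Rf_sq[of sg cc] sg cc_pos by simp
  have rsg: "0 < rr sg" using rr_pos sg by auto
  have "(rr sg)^2 < R^2" using Rsq cc_pos sg by simp
  then have rsgR: "rr sg < R" using R by (simp add: power_less_imp_less_base less_imp_le)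
  have S: "rr S = R" "0 \<le> S" "S \<le> 1" "S < 1" unfolding S_def using rr_rinv[of R] rinv_lt1[of R] R by auto
  have sgS: "sg < S"
  proof (rule ccontr)
    assume "\<not> sg < S"
    then have "rr S \<le> rr sg" using rr_strict[of S sg] S sg by (cases "S = sg") auto
    then show False using S rsgR by simp
  qed
  have m: "0 < m" "m < x" unfolding m_def using S sgS sg_def by auto
  have G1: "(rr t)^2 = 2 * (G 1 - G (1 - t))" if "0 \<le> t" "t \<le> 1" for t using rr_sq that by simp
  have Gm: "2 * G m = 2 * G x - cc * sg^2"
    using G1[of S] G1[of sg] Rsq S sg unfolding m_def sg_def by simp
  have ccmu: "mu * cc = k^2" unfolding cc_def using mu by simp
  have Gm2: "2 * mu * G m = 2 * mu * G x - (yline k x)^2"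
  proof -
    have "2 * mu * G m = mu * (2 * G m)" by simp
    also have "\<dots> = 2 * mu * G x - (mu * cc) * sg^2" unfolding Gm by (simp add: algebra_simps)
    finally show ?thesis unfolding ccmu yline_sq sg_def by simp
  qed
  have mfm: "mfun mu k x = m" unfolding mfun_def
  proof (rule the_equality)
    show "0 < m \<and> m < x \<and> 2 * mu * G m = 2 * mu * G x - (yline k x)^2" using m Gm2 by simp
    fix s assume a: "0 < s \<and> s < x \<and> 2 * mu * G s = 2 * mu * G x - (yline k x)^2"
    then have "2 * mu * G s = 2 * mu * G m" using Gm2 by linarith
    then have "G s = G m" using mu by simp
    then show "s = m" using G_strict[of s m] G_strict[of m s] a m x by (cases "s < m"; cases "m < s") auto
  qed
  show "mfun mu k x = 1 - rinv (Rf cc (1-x))" unfolding mfm m_def S_def R_def sg_def ..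
  show "0 < mfun mu k x" "mfun mu k x < x" "2 * mu * G (mfun mu k x) = 2 * mu * G x - (yline k x)^2"
    unfolding mfm using m Gm2 by auto
  define KK where "KK = Kf cc sg"
  define I where "I t = integral {0..t} KK" for t
  define th where "th u = arcsin (rr (1-u) / R)" for u
  define Phi where "Phi u = - I (th u) / sqrt mu" for u
  have sgU: "sg \<in> UU" using sg by simp
  have KKc: "continuous_on {0..pi/2} KK" unfolding KK_def using Kf_cont[OF sgU] .
  have rr_le: "rr (1-u) \<le> R" if "u \<in> {m..x}" for u
  proof -
    have "1 - u \<le> S" "0 \<le> 1 - u" using that m x unfolding m_def by auto
    then have "rr (1-u) \<le> rr S" using rr_strict[of "1-u" S] S by (cases "1-u = S") auto
    then show ?thesis using S by simp
  qed
  have w_rng: "0 \<le> rr (1-u) / R \<and> rr (1-u) / R \<le> 1" if "u \<in> {m..x}" for u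
    using rr_le[OF that] rr_nonneg[of "1-u"] that m x R by auto
  have th_rng: "th u \<in> {0..pi/2}" if "u \<in> {m..x}" for u
  proof -
    have "0 \<le> th u" unfolding th_def using w_rng[OF that] by (intro arcsin_nonneg) auto
    moreover have "th u \<le> arcsin 1" unfolding th_def using w_rng[OF that] by (intro arcsin_le_arcsin) auto
    ultimately show ?thesis by simp
  qed
  have cw: "continuous_on {m..x} (\<lambda>u. rr (1-u) / R)"
  proof -
    have "continuous_on {m..x} (\<lambda>u. rr (1-u))"
      by (rule continuous_on_compose2[OF rr_cont]) (use m x in \<open>auto intro!: continuous_intros\<close>)
    then show ?thesis by (intro continuous_intros) (use R in auto)
  qed
  have cth: "continuous_on {m..x} th" unfolding th_def
  proof (rule continuous_on_arcsin[OF cw], intro ballI)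
    fix u assume "u \<in> {m..x}"
    then show "- 1 \<le> rr (1 - u) / R \<and> rr (1 - u) / R \<le> 1" using w_rng[of u] by linarith
  qed
  have cI: "continuous_on {0..pi/2} I" unfolding I_def
    by (rule indefinite_integral_continuous_1) (rule integrable_continuous_interval[OF KKc])
  have cPhi: "continuous_on {m..x} Phi" unfolding Phi_def
  proof (intro continuous_intros)
    show "continuous_on {m..x} (\<lambda>u. I (th u))"
      by (rule continuous_on_compose2[OF cI cth]) (use th_rng in auto)
  qed (use mu in auto)
  have dPhi: "(Phi has_real_derivative Tl_integrand mu k x u) (at u)" if u: "m < u" "u < x" for u
  proof -
    define t where "t = 1 - u"
    define w where "w = rr t / R"
    have t: "sg < t" "t < S" "0 \<le> t" "t < 1" using u S x unfolding t_def sg_def m_def by auto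
    have rt: "rr sg < rr t" "rr t < R" using rr_strict[of sg t] rr_strict[of t S] t sg S by auto
    have w: "0 < w" "w < 1" unfolding w_def using rt rsg R by (auto simp: field_simps)
    have d1: "((\<lambda>u. 1 - u) has_real_derivative -1) (at u)" by (auto intro!: derivative_eq_intros)
    have d2: "((\<lambda>u. rr (1-u)) has_real_derivative ((1-t)^2 / sqrt (DD t)) * -1) (at u)"
      using DERIV_chain2[OF rr_deriv[of "1-u"] d1] t unfolding t_def by simp
    have d3: "((\<lambda>u. rr (1-u) / R) has_real_derivative ((1-t)^2 / sqrt (DD t)) * -1 / R) (at u)"
      by (rule DERIV_cdivide[OF d2])
    have d4: "(th has_real_derivative inverse (sqrt (1 - w^2)) * (((1-t)^2 / sqrt (DD t)) * -1 / R)) (at u)"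
      unfolding th_def[abs_def] using DERIV_chain2[OF DERIV_arcsin d3] w unfolding w_def t_def by simp
    have thu: "th u = arcsin w" unfolding th_def w_def t_def ..
    have th01: "0 < th u" "th u < pi/2"
    proof -
      have "arcsin 0 < arcsin w" using w by (intro arcsin_less_arcsin) auto
      moreover have "arcsin w < arcsin 1" using w by (intro arcsin_less_arcsin) auto
      ultimately show "0 < th u" "th u < pi/2" using thu by auto
    qed
    have d5: "(I has_real_derivative KK (th u)) (at (th u))"
    proof -
      have "(I has_real_derivative KK (th u)) (at (th u) within {0..pi/2})"
        unfolding I_def[abs_def] by (rule integral_has_real_derivative[OF KKc]) (use th01 in auto)
      then show ?thesis using at_within_Icc_at[of 0 "th u" "pi/2"] th01 by simp
    qed
    have d6: "((\<lambda>u. I (th u)) has_real_derivative KK (th u) * (inverse (sqrt (1 - w^2)) * (((1-t)^2 / sqrt (DD t)) * -1 / R))) (at u)"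
      by (rule DERIV_chain2[OF d5 d4])
    have d7: "(Phi has_real_derivative - (KK (th u) * (inverse (sqrt (1 - w^2)) * (((1-t)^2 / sqrt (DD t)) * -1 / R))) / sqrt mu) (at u)"
      unfolding Phi_def[abs_def] by (intro DERIV_cdivide DERIV_minus d6)
    have KKth: "KK (th u) = QQ t"
    proof -
      have "R * sin (th u) = rr t" unfolding thu using w R by (simp add: sin_arcsin w_def)
      then show ?thesis unfolding KK_def Kf_def R_def[symmetric] using rinv_rr[of t] t by simp
    qed
    have val1: "- (KK (th u) * (inverse (sqrt (1 - w^2)) * (((1-t)^2 / sqrt (DD t)) * -1 / R))) / sqrt mu
        = 1 / (sqrt mu * R * sqrt (1 - w^2))"
    proof -
      have q: "QQ t * ((1-t)^2 / sqrt (DD t)) = 1" using QQ_id[of t] t by blast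
      have "- (KK (th u) * (inverse (sqrt (1 - w^2)) * (((1-t)^2 / sqrt (DD t)) * -1 / R))) / sqrt mu
          = (QQ t * ((1-t)^2 / sqrt (DD t))) / (sqrt mu * R * sqrt (1 - w^2))"
        unfolding KKth by (simp add: field_simps)
      also have "\<dots> = 1 / (sqrt mu * R * sqrt (1 - w^2))" unfolding q ..
      finally show ?thesis .
    qed
    have "(yline k x)^2 + 2 * mu * (G u - G x) = mu * (R^2 - (rr t)^2)"
    proof -
      have e1: "(rr t)^2 = 2 * (G 1 - G u)" using G1[of t] t unfolding t_def by simp
      have e2: "(rr sg)^2 = 2 * (G 1 - G x)" using G1[of sg] sg unfolding sg_def by simp
      have "mu * (R^2 - (rr t)^2) = 2 * mu * (G u - G x) + (mu * cc) * sg^2"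
        unfolding Rsq e1 e2 by (simp add: algebra_simps)
      then show ?thesis unfolding ccmu yline_sq sg_def by simp
    qed
    also have "R^2 - (rr t)^2 = R^2 * (1 - w^2)" unfolding w_def using R by (simp add: field_simps)
    finally have "sqrt ((yline k x)^2 + 2 * mu * (G u - G x)) = sqrt mu * R * sqrt (1 - w^2)"
      using R by (simp add: real_sqrt_mult)
    then have "Tl_integrand mu k x u = 1 / (sqrt mu * R * sqrt (1 - w^2))" unfolding Tl_integrand_def by simp
    then show ?thesis using d7 val1 by simp
  qed
  have "(Tl_integrand mu k x has_integral (Phi x - Phi m)) {m..x}"
    by (rule fundamental_theorem_of_calculus_interior[OF _ cPhi])
       (use m dPhi in \<open>auto simp: has_real_derivative_iff_has_vector_derivative\<close>)
  moreover have "Phi x - Phi m = TT mu k (1-x)"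
  proof -
    have thx: "th x = af cc sg" unfolding th_def using af_eq[OF cc_pos, of sg] sg unfolding R_def sg_def by simp
    have thm0: "th m = pi/2" unfolding th_def m_def using S R by simp
    have a: "0 \<le> af cc sg" "af cc sg \<le> pi/2" using af_range[OF cc_pos, of sg] by auto
    have "I (af cc sg) + integral {af cc sg..pi/2} KK = I (pi/2)" unfolding I_def
      by (rule Henstock_Kurzweil_Integration.integral_combine) (use a integrable_continuous_interval[OF KKc] in auto)
    then show ?thesis unfolding Phi_def thx thm0 TT_def cc_def[symmetric] KK_def sg_def
      by (simp add: diff_divide_distrib[symmetric] add_divide_distrib[symmetric] algebra_simps)
  qed
  ultimately show "(Tl_integrand mu k x has_integral TT mu k (1-x)) {1 - rinv (Rf cc (1-x)) .. x}"
    unfolding m_def S_def R_def sg_def by simp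
qed


lemma Tl_eq: assumes "xl mu k < x" "x < 1"
  shows "Tl mu k x = TT mu k (1-x)" "Tl_integrand mu k x integrable_on {mfun mu k x..x}"
  using FTC[OF assms] unfolding Tl_def by (auto simp: integral_unique has_integral_integrable)

lemma LB: assumes x: "xl mu k < x" "x < 1" and m2: "2 * mfun mu k x \<le> x"
  shows "1 / sqrt (16 * mu * mfun mu k x / 3) \<le> Tl mu k x"
proof -
  define m where "m = mfun mu k x"
  define f where "f = Tl_integrand mu k x"
  define C where "C = 1 / sqrt (16 * mu * m^3 / 3)"
  have m: "0 < m" "m < x" "2 * mu * G m = 2 * mu * G x - (yline k x)^2" "2 * m \<le> x"
    using FTC(3-5)[OF x] m2 unfolding m_def by auto
  have intf: "f integrable_on {m..x}" using Tl_eq(2)[OF x] unfolding f_def m_def .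
  have fval: "f u = 1 / sqrt (2 * mu * (G u - G m))" for u
    unfolding f_def Tl_integrand_def using m(3) by (simp add: algebra_simps)
  have fnn: "0 \<le> f u" if "u \<in> {m..x}" for u
  proof -
    have "G m \<le> G u" using G_mono[of m u] that m x by auto
    then show ?thesis unfolding fval using mu by simp
  qed
  have fC: "C \<le> f u" if "u \<in> {m<..2*m}" for u
  proof -
    have u: "m < u" "u \<le> 2*m" using that by auto
    have "G m < G u" using G_strict[of m u] u m x by auto
    moreover have "G u - G m \<le> 8 * m^3 / 3"
    proof -
      have "G m \<ge> 0" using G_nonneg[of m] m x by auto
      moreover have "G u \<le> u^3/3" by (rule G_upper)
      moreover have "u^3 \<le> (2*m)^3" using u m by (intro power_mono) auto
      ultimately show ?thesis by simp
    qed
    ultimately have "0 < 2 * mu * (G u - G m)" "2 * mu * (G u - G m) \<le> 16 * mu * m^3 / 3"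
      using mu by auto
    then have "sqrt (2 * mu * (G u - G m)) \<le> sqrt (16 * mu * m^3 / 3)" "0 < sqrt (2 * mu * (G u - G m))"
      by auto
    then show ?thesis unfolding fval C_def by (simp add: frac_le)
  qed
  have int2: "f integrable_on {m..2*m}"
    by (rule integrable_subinterval_real[OF intf]) (use m in auto)
  have "integral {m..2*m} f \<le> integral {m..x} f"
    by (rule integral_subset_le) (use m int2 intf fnn in auto)
  moreover have "m * C \<le> integral {m..2*m} f"
  proof -
    define f2 where "f2 u = (if u = m then C else f u)" for u
    have e: "integral {m..2*m} f2 = integral {m..2*m} f"
      by (rule integral_spike[of "{m}"]) (auto simp: f2_def)
    have i2: "f2 integrable_on {m..2*m}"
      by (rule integrable_spike[OF int2, of "{m}"]) (auto simp: f2_def)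
    have "integral {m..2*m} (\<lambda>_. C) \<le> integral {m..2*m} f2"
      by (rule integral_le) (use i2 fC in \<open>auto simp: f2_def\<close>)
    then show ?thesis using e m by simp
  qed
  moreover have "m * C = 1 / sqrt (16 * mu * m / 3)"
  proof -
    have "sqrt (16 * mu * m^3 / 3) = m * sqrt (16 * mu * m / 3)"
    proof -
      have eq: "16 * mu * m^3 / 3 = m^2 * (16 * mu * m / 3)" by (simp add: power2_eq_square power3_eq_cube)
      have "sqrt (16 * mu * m^3 / 3) = sqrt (m^2) * sqrt (16 * mu * m / 3)" unfolding eq by (rule real_sqrt_mult)
      also have "sqrt (m^2) = m" using m by simp
      finally show ?thesis .
    qed
    then show ?thesis unfolding C_def using m by simp
  qed
  ultimately show ?thesis using Tl_def f_def m_def by simp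
qed

lemma main_ctx:
  shows "(\<forall>x \<in> {xl mu k <..< 1}.
            Tl_integrand mu k x integrable_on {mfun mu k x .. x} \<and> Tl mu k x > 0)
       \<and> continuous_on {xl mu k <..< 1} (Tl mu k)
       \<and> (\<forall>a b. xl mu k < a \<longrightarrow> a < b \<longrightarrow> b < 1 \<longrightarrow> Tl mu k b < Tl mu k a)
       \<and> (Tl mu k \<longlongrightarrow> (1 / sqrt mu) * arctan (k / sqrt mu)) (at_left 1)
       \<and> filterlim (Tl mu k) at_top (at_right (xl mu k))"
proof (intro conjI)
  have inU: "1 - x \<in> UU" if "xl mu k < x" "x < 1" for x using that unfolding sl_def by auto
  show "\<forall>x \<in> {xl mu k <..< 1}. Tl_integrand mu k x integrable_on {mfun mu k x .. x} \<and> Tl mu k x > 0"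
    using Tl_eq TT_pos inU by auto
  show "continuous_on {xl mu k <..< 1} (Tl mu k)"
  proof -
    have "continuous_on {xl mu k <..< 1} (\<lambda>x. TT mu k (1 - x))"
      by (rule continuous_on_compose2[OF TT_cont]) (use inU in \<open>auto intro!: continuous_intros\<close>)
    then show ?thesis by (rule continuous_on_eq) (use Tl_eq in auto)
  qed
  show "\<forall>a b. xl mu k < a \<longrightarrow> a < b \<longrightarrow> b < 1 \<longrightarrow> Tl mu k b < Tl mu k a"
  proof (intro allI impI)
    fix a b assume ab: "xl mu k < a" "a < b" "b < 1"
    have "TT mu k (1-b) < TT mu k (1-a)" by (rule TT_strict) (use ab in \<open>auto simp: sl_def\<close>)
    then show "Tl mu k b < Tl mu k a" using Tl_eq ab by simp
  qed
  show "(Tl mu k \<longlongrightarrow> (1 / sqrt mu) * arctan (k / sqrt mu)) (at_left 1)"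
  proof -
    have ev: "eventually (\<lambda>x. x \<in> {xl mu k<..<1}) (at_left 1)"
      using xl_props by (intro eventually_at_left_real) auto
    have t1: "(TT mu k \<longlongrightarrow> TT mu k 0) (at 0 within UU)"
      using TT_cont sl_range unfolding continuous_on_def by auto
    have t2: "filterlim (\<lambda>x. 1 - x) (at 0 within UU) (at_left 1)"
    proof (rule filterlim_at_withinI)
      show "filterlim (\<lambda>x. 1 - x) (nhds 0) (at_left (1::real))"
        by (rule tendsto_eq_intros refl)+ simp
      show "eventually (\<lambda>x. 1 - x \<in> UU - {0}) (at_left (1::real))"
        using ev by eventually_elim (auto simp: sl_def)
    qed
    have "((\<lambda>x. TT mu k (1 - x)) \<longlongrightarrow> TT mu k 0) (at_left 1)"
      by (rule filterlim_compose[OF t1 t2])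
    moreover have "eventually (\<lambda>x. TT mu k (1 - x) = Tl mu k x) (at_left 1)"
      using ev by eventually_elim (use Tl_eq in auto)
    ultimately show ?thesis unfolding TT_0 by (rule Lim_transform_eventually)
  qed
  show "filterlim (Tl mu k) at_top (at_right (xl mu k))"
    unfolding filterlim_at_top
  proof
    fix Z :: real
    define Z' where "Z' = max Z 1"
    have Z': "Z \<le> Z'" "0 < Z'" unfolding Z'_def by auto
    define e where "e = min (xl mu k / 2) (3 / (16 * mu * Z'^2))"
    have e: "0 < e" "e \<le> xl mu k / 2" "e \<le> 3 / (16 * mu * Z'^2)"
      unfolding e_def using xl_props mu Z' by auto
    have ev1: "eventually (\<lambda>x. x \<in> {xl mu k<..<1}) (at_right (xl mu k))"
      using xl_props by (intro eventually_at_right_real) auto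
    have "(hh \<longlongrightarrow> hh (xl mu k)) (at_right (xl mu k))"
    proof -
      have "(hh \<longlongrightarrow> hh (xl mu k)) (at (xl mu k) within UNIV)"
        using hh_cont[of UNIV] unfolding continuous_on_def by blast
      then show ?thesis by (rule tendsto_mono[OF at_le, rotated]) simp
    qed
    then have "(hh \<longlongrightarrow> 0) (at_right (xl mu k))" using xl_props by simp
    then have ev2: "eventually (\<lambda>x. hh x < 2 * mu * (e^3/12)) (at_right (xl mu k))"
      using mu e by (intro order_tendstoD(2)) auto
    show "eventually (\<lambda>x. Z \<le> Tl mu k x) (at_right (xl mu k))"
      using ev1 ev2
    proof eventually_elim
      case (elim x)
      then have x: "xl mu k < x" "x < 1" by auto
      define m where "m = mfun mu k x"
      have m: "0 < m" "m < x" "2 * mu * G m = 2 * mu * G x - (yline k x)^2"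
        using FTC(3-5)[OF x] unfolding m_def by auto
      have "2 * mu * G m = hh x" unfolding hh_def m(3) yline_sq ..
      then have "mu * (12 * G m) = 6 * hh x" by simp
      also have "\<dots> < mu * e^3" using elim by simp
      finally have "G m < e^3/12" using mu by simp
      moreover have "m^3/12 \<le> G m" using G_lower[of m] m x by auto
      ultimately have "m^3 < e^3" by simp
      then have me: "m < e" using e by (simp add: power_less_imp_less_base less_imp_le)
      have "2 * m \<le> x" using me e x by simp
      then have lb: "1 / sqrt (16 * mu * m / 3) \<le> Tl mu k x" using LB[OF x] unfolding m_def by simp
      have "16 * mu * m / 3 < 16 * mu * e / 3" using me mu by simp
      also have "\<dots> = (16 * mu / 3) * e" by simp
      also have "\<dots> \<le> (16 * mu / 3) * (3 / (16 * mu * Z'^2))" using e mu by (intro mult_left_mono) auto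
      also have "\<dots> = (1/Z')^2" using mu Z' by (simp add: field_simps power2_eq_square)
      finally have "sqrt (16 * mu * m / 3) < sqrt ((1/Z')^2)" by (rule real_sqrt_less_mono)
      then have "sqrt (16 * mu * m / 3) < 1/Z'" using Z' by simp
      moreover have "0 < sqrt (16 * mu * m / 3)" using m mu by simp
      ultimately have "Z' < 1 / sqrt (16 * mu * m / 3)" using Z' by (simp add: field_simps)
      then show ?case using lb Z' by linarith
    qed
  qed
qed

end

theorem proposition3p2:
  fixes mu k :: real
  assumes "mu > 0" and "k > 0"
  shows "(\<forall>x \<in> {xl mu k <..< 1}.
            Tl_integrand mu k x integrable_on {mfun mu k x .. x} \<and> Tl mu k x > 0)
       \<and> continuous_on {xl mu k <..< 1} (Tl mu k)
       \<and> (\<forall>a b. xl mu k < a \<longrightarrow> a < b \<longrightarrow> b < 1 \<longrightarrow> Tl mu k b < Tl mu k a)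
       \<and> (Tl mu k \<longlongrightarrow> (1 / sqrt mu) * arctan (k / sqrt mu)) (at_left 1)
       \<and> filterlim (Tl mu k) at_top (at_right (xl mu k))"
  using main_ctx[OF assms] .

end
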